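(* Let $b\in(0,1)$ and $\delta\in[0,\tfrac13)$. Let $\mu$ be a nonnegative Borel measure on $[0,\infty)$ such that $-K_0'(t)=\int_0^\infty e^{-tx}\,\mathrm{d}\mu(x)$ for a function $K_0:(0,\infty)\to\mathbb{R}$ (so $-K_0'$ is completely monotone), and set $\lambda_{n,b}=2\int_0^\infty\phi_n(bx)\,\frac{\mathrm{d}\mu(x)}{x}$, where $\phi_n(x)=\int_0^\pi e^{-2x\sin\eta}e^{2in\eta}\,\mathrm{d}\eta$. Let $\Psi_k$ be defined by $\Psi_0(x)=\frac{x}{1+x^2}$ and $\Psi_{k+1}(x)=\frac{x^2}{4(1+x^2)}\big(\Psi_k''(x)+\frac1x\Psi_k'(x)\big)$ for $k\in\mathbb{N}$. Then for all $n\ge1$ and $N\ge0$: (1) for all $x>0$, $\phi_n(x)=\sum_{k=0}^N\frac{1}{n^{2k+1}}\Psi_k(\tfrac xn)+\tfrac1n g_{n,N}(\tfrac xn)$ with $\big|\tfrac1n g_{n,N}(\tfrac xn)\big|\le\frac{C_{N,\delta}}{n^{2N+\frac53}}\frac{x^\delta}{1+\frac xn}$; (2) $\lambda_{n,b}=2\sum_{k=0}^N\frac{1}{n^{2k+1}}\int_0^\infty\Psi_k(\tfrac{bx}{n})\,\frac{\mathrm{d}\mu(x)}{x}+\varepsilon_{n,N}$ with $|\varepsilon_{n,N}|\le\frac{C_{N,\delta}}{n^{2N+\frac53}}\int_0^\infty\frac{x^{\delta-1}}{1+\frac{bx}{n}}\,\mathrm{d}\mu(x)$, where $C_{N,\delta}>0$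 depends only on $N$ and $\delta$.
   Context: In (1), $g_{n,N}$ is the function defined by $\varphi_n(y)=\sum_{k=0}^N n^{-2k}\Psi_k(y)+g_{n,N}(y)$ where $\varphi_n(y)=n\phi_n(ny)$; thus (1) is an identity defining the remainder together with the stated bound. A function is completely monotone if it is $C^\infty$ on $(0,\infty)$ with $(-1)^nf^{(n)}\ge0$ for all $n\ge0$. *)

theory Defs
  imports "HOL-Analysis.Analysis"
begin

definition phi :: "nat \<Rightarrow> real \<Rightarrow> complex" where
  "phi n x = integral {0..pi}
     (\<lambda>\<eta>. complex_of_real (exp (- 2 * x * sin \<eta>)) * exp (2 * \<i> * of_nat n * complex_of_real \<eta>))"

fun Psi :: "nat \<Rightarrow> real \<Rightarrow> real" where
  "Psi 0 = (\<lambda>x. x / (1 + x\<^sup>2))"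
| "Psi (Suc k) = (\<lambda>x. x\<^sup>2 / (4 * (1 + x\<^sup>2)) *
       (deriv (deriv (Psi k)) x + deriv (Psi k) x / x))"

definition lambda_nb :: "real measure \<Rightarrow> nat \<Rightarrow> real \<Rightarrow> complex" where
  "lambda_nb M n b = 2 * (\<integral>x. phi n (b * x) / complex_of_real x \<partial>M)"

end

theory Submission
  imports Defs "HOL-Computational_Algebra.Polynomial"
begin


definition qq :: "real poly" where "qq = [:1,0,1:]"
definition dP :: "nat \<Rightarrow> real poly \<Rightarrow> real poly" where
  "dP m S = pderiv S * qq - smult (2 * real m) (pCons 0 S)"

fun SS :: "nat \<Rightarrow> real poly" where
  "SS 0 = [:0,1:]"
| "SS (Suc k) = pCons 0 (smult (1/4) (pCons 0 (dP (3*k+2) (dP (3*k+1) (SS k))) + dP (3*k+1) (SS k) * qq))"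

lemma poly_qq[simp]: "poly qq y = 1 + y\<^sup>2"
  by (simp add: qq_def power2_eq_square)

lemma dP_deriv:
  "((\<lambda>y. poly S y / (1+y\<^sup>2)^m) has_real_derivative poly (dP m S) y / (1+y\<^sup>2)^(Suc m)) (at y)"
proof -
  have q: "1 + y\<^sup>2 > 0" by (simp add: add_pos_nonneg)
  have "((\<lambda>y. poly S y / (1+y\<^sup>2)^m) has_real_derivative
     (poly (pderiv S) y * (1+y\<^sup>2)^m - poly S y * (real m * (1+y\<^sup>2)^(m-1) * (2*y))) / ((1+y\<^sup>2)^m * (1+y\<^sup>2)^m)) (at y)"
    using q by (auto intro!: derivative_eq_intros poly_DERIV simp: power2_eq_square)
  moreover have "(poly (pderiv S) y * (1+y\<^sup>2)^m - poly S y * (real m * (1+y\<^sup>2)^(m-1) * (2*y))) / ((1+y\<^sup>2)^m * (1+y\<^sup>2)^m)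
     = poly (dP m S) y / (1+y\<^sup>2)^(Suc m)"
  proof (cases m)
    case 0 then show ?thesis using q by (simp add: dP_def)
  next
    case (Suc j)
    have a: "(1+y\<^sup>2)^j > 0" using q by simp
    have gen: "\<And>Q a A S. Q > 0 \<Longrightarrow> a > 0 \<Longrightarrow> (A*(Q*a) - S*(real m*a*(2*y)))/((Q*a)*(Q*a)) = (A*Q - 2*real m*y*S)/(Q*(Q*a))"
      by (simp add: field_simps)
    show ?thesis using gen[OF q a, of "poly (pderiv S) y" "poly S y"] Suc
      by (simp add: dP_def algebra_simps)
  qed
  ultimately show ?thesis by simp
qed

lemma deriv_rat: "deriv (\<lambda>y. poly S y / (1+y\<^sup>2)^m) = (\<lambda>y. poly (dP m S) y / (1+y\<^sup>2)^(Suc m))"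
  using dP_deriv[THEN DERIV_imp_deriv] by (rule ext)

lemma Psi_rep: "Psi k = (\<lambda>y. poly (SS k) y / (1+y\<^sup>2)^(3*k+1))"
proof (induction k)
  case 0
  show ?case by (simp add: fun_eq_iff)
next
  case (Suc k)
  have d1: "deriv (Psi k) = (\<lambda>y. poly (dP (3*k+1) (SS k)) y / (1+y\<^sup>2)^(3*k+2))"
    unfolding Suc deriv_rat by simp
  have d2: "deriv (deriv (Psi k)) = (\<lambda>y. poly (dP (3*k+2) (dP (3*k+1) (SS k))) y / (1+y\<^sup>2)^(Suc (3*k+2)))"
    unfolding d1 deriv_rat by (rule refl)
  show ?case
  proof (rule ext)
    fix y :: real
    have q: "1 + y\<^sup>2 > 0" by (simp add: add_pos_nonneg)
    show "Psi (Suc k) y = poly (SS (Suc k)) y / (1+y\<^sup>2)^(3*Suc k+1)"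
    proof (cases "y = 0")
      case True then show ?thesis by simp
    next
      case False
      define Q where "Q = 1 + y\<^sup>2"
      define a where "a = Q^(3*k)"
      define A where "A = poly (dP (3*k+1) (SS k)) y"
      define B where "B = poly (dP (3*k+2) (dP (3*k+1) (SS k))) y"
      have Qp: "Q > 0" using q Q_def by simp
      have ap: "a > 0" using Qp a_def by simp
      have e: "Psi (Suc k) y = y\<^sup>2/(4*(1+y\<^sup>2)) * (B/(1+y\<^sup>2)^(Suc(3*k+2)) + A/(1+y\<^sup>2)^(3*k+2)/y)"
        unfolding Psi.simps unfolding d2 unfolding d1 A_def B_def by (rule refl)
      have p1: "(1+y\<^sup>2)^(3*k+2) = Q*Q*a" "(1+y\<^sup>2)^(Suc(3*k+2)) = Q*Q*Q*a" "(1+y\<^sup>2)^(3*Suc k+1) = Q*Q*Q*Q*a"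
        unfolding Q_def a_def by (simp_all add: power_add power_Suc eval_nat_numeral)
      have p2: "poly (SS (Suc k)) y = y * (1/4) * (y * B + A * Q)"
        by (simp add: A_def B_def Q_def)
      show ?thesis unfolding e p1 p2 using Qp ap False
        unfolding Q_def[symmetric] by (simp add: field_simps power2_eq_square)
    qed
  qed
qed

lemma deg_dP: "degree (dP m S) \<le> degree S + 1"
proof -
  have "degree (pderiv S * qq) \<le> degree S + 1"
  proof -
    have dq: "degree qq = 2" by (simp add: qq_def)
    show ?thesis
    proof (cases "degree S = 0")
      case True then have "pderiv S = 0" by (simp add: pderiv_eq_0_iff)
      then show ?thesis by simp
    next
      case False
      then have "degree (pderiv S) + degree qq = degree S + 1" using dq degree_pderiv[of S] by simp
      then show ?thesis using degree_mult_le[of "pderiv S" qq] by simp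
    qed
  qed
  moreover have "degree (smult (2 * real m) (pCons 0 S)) \<le> degree S + 1"
    using degree_smult_le[of "2 * real m" "pCons 0 S"] degree_pCons_le[of 0 S] by linarith
  ultimately show ?thesis unfolding dP_def by (rule degree_diff_le)
qed

lemma SS_props: "coeff (SS k) 0 = 0 \<and> degree (SS k) \<le> 6*k+1"
proof (induction k)
  case 0 then show ?case by simp
next
  case (Suc k)
  let ?S1 = "dP (3*k+1) (SS k)"
  let ?S2 = "dP (3*k+2) ?S1"
  have d1: "degree ?S1 \<le> 6*k+2" using deg_dP[of "3*k+1" "SS k"] Suc by simp
  have d2: "degree ?S2 \<le> 6*k+3" using deg_dP[of "3*k+2" ?S1] d1 by simp
  have d3: "degree (pCons 0 ?S2) \<le> 6*k+4" using degree_pCons_le[of 0 ?S2] d2 by simp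
  have d4: "degree (?S1 * qq) \<le> 6*k+4" using degree_mult_le[of ?S1 qq] d1 by (simp add: qq_def)
  have "degree (pCons 0 ?S2 + ?S1 * qq) \<le> 6*k+4" using d3 d4 by (rule degree_add_le)
  then have "degree (smult (1/4) (pCons 0 ?S2 + ?S1 * qq)) \<le> 6*k+4"
    using degree_smult_le[of "1/4" "pCons 0 ?S2 + ?S1 * qq"] by linarith
  then have "degree (SS (Suc k)) \<le> 6*k+5"
    using degree_pCons_le[of 0 "smult (1/4) (pCons 0 ?S2 + ?S1 * qq)"] by simp
  then show ?case by simp
qed

lemma pow_bound:
  fixes y :: real
  assumes "y > 0" "1 \<le> i" "i \<le> 2*j+1"
  shows "y^i \<le> y*(1+y\<^sup>2)^j"
proof -
  obtain l where l: "i = Suc l" using assms(2) by (cases i) auto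
  have ll: "l \<le> 2*j" using assms l by simp
  have "y^l \<le> (1+y\<^sup>2)^j"
  proof (cases "y \<le> 1")
    case True
    then have "y^l \<le> 1" using assms(1) by (simp add: power_le_one)
    also have "1 \<le> (1+y\<^sup>2)^j" by simp
    finally show ?thesis .
  next
    case False
    then have "y^l \<le> y^(2*j)" using ll by (simp add: power_increasing)
    also have "\<dots> = (y\<^sup>2)^j" by (simp add: power_mult)
    also have "\<dots> \<le> (1+y\<^sup>2)^j" by (simp add: power_mono)
    finally show ?thesis .
  qed
  then show ?thesis using assms(1) l by (simp add: mult_left_mono)
qed

lemma poly_bound:
  fixes y :: real
  assumes "y > 0" "coeff S 0 = 0" "degree S \<le> 2*j+1"
  shows "\<bar>poly S y\<bar> \<le> (\<Sum>i\<le>degree S. \<bar>coeff S i\<bar>) * (y*(1+y\<^sup>2)^j)"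
proof -
  have "\<bar>poly S y\<bar> = \<bar>\<Sum>i\<le>degree S. coeff S i * y^i\<bar>" by (simp add: poly_altdef)
  also have "\<dots> \<le> (\<Sum>i\<le>degree S. \<bar>coeff S i * y^i\<bar>)" by (rule sum_abs)
  also have "\<dots> \<le> (\<Sum>i\<le>degree S. \<bar>coeff S i\<bar> * (y*(1+y\<^sup>2)^j))"
  proof (rule sum_mono)
    fix i assume i: "i \<in> {..degree S}"
    show "\<bar>coeff S i * y^i\<bar> \<le> \<bar>coeff S i\<bar> * (y*(1+y\<^sup>2)^j)"
    proof (cases "i = 0")
      case True then show ?thesis using assms by simp
    next
      case False
      then have "y^i \<le> y*(1+y\<^sup>2)^j" using pow_bound[OF assms(1), of i j] i assms(3) by simp
      then show ?thesis using assms(1) by (simp add: abs_mult mult_left_mono)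
    qed
  qed
  also have "\<dots> = (\<Sum>i\<le>degree S. \<bar>coeff S i\<bar>) * (y*(1+y\<^sup>2)^j)" by (simp add: sum_distrib_right)
  finally show ?thesis .
qed

lemma Psi_bound: "\<exists>A\<ge>0. \<forall>y>0. \<bar>Psi k y\<bar> * (1+y\<^sup>2) \<le> A*y"
proof (intro exI[of _ "\<Sum>i\<le>degree (SS k). \<bar>coeff (SS k) i\<bar>"] conjI allI impI)
  show "0 \<le> (\<Sum>i\<le>degree (SS k). \<bar>coeff (SS k) i\<bar>)" by (simp add: sum_nonneg)
  fix y :: real assume y: "y > 0"
  let ?A = "\<Sum>i\<le>degree (SS k). \<bar>coeff (SS k) i\<bar>"
  have q: "1 + y\<^sup>2 > 0" by (simp add: add_pos_nonneg)
  have pb: "\<bar>poly (SS k) y\<bar> \<le> ?A * (y*(1+y\<^sup>2)^(3*k))"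
    using poly_bound[OF y, of "SS k" "3*k"] SS_props[of k] by simp
  have e: "(1+y\<^sup>2)^(3*k+1) = (1+y\<^sup>2)^(3*k)*(1+y\<^sup>2)" by simp
  have "\<bar>Psi k y\<bar> * (1+y\<^sup>2) = \<bar>poly (SS k) y\<bar> / ((1+y\<^sup>2)^(3*k)*(1+y\<^sup>2)) * (1+y\<^sup>2)"
    unfolding Psi_rep e using q by (simp add: abs_div)
  also have "\<dots> = \<bar>poly (SS k) y\<bar> / (1+y\<^sup>2)^(3*k)" using q by simp
  also have "\<dots> \<le> ?A * y"
  proof -
    have ap: "(1+y\<^sup>2)^(3*k) > 0" using q by simp
    have "\<bar>poly (SS k) y\<bar> \<le> ?A * y * (1+y\<^sup>2)^(3*k)" using pb by (simp only: mult.assoc)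
    then show ?thesis by (simp only: pos_divide_le_eq[OF ap])
  qed
  finally show "\<bar>Psi k y\<bar> * (1+y\<^sup>2) \<le> ?A * y" .
qed



definition uu :: "nat \<Rightarrow> real \<Rightarrow> real" where
  "uu n x = integral {0..pi} (\<lambda>t. exp (- 2 * x * sin t) * cos (2 * real n * t))"
definition vv :: "nat \<Rightarrow> real \<Rightarrow> real" where
  "vv n x = integral {0..pi} (\<lambda>t. exp (- 2 * x * sin t) * sin (2 * real n * t))"
definition u1 :: "nat \<Rightarrow> real \<Rightarrow> real" where
  "u1 n x = integral {0..pi} (\<lambda>t. - 2 * sin t * exp (- 2 * x * sin t) * cos (2 * real n * t))"
definition u2 :: "nat \<Rightarrow> real \<Rightarrow> real" where
  "u2 n x = integral {0..pi} (\<lambda>t. 4 * (sin t)\<^sup>2*exp (- 2 * x * sin t) * cos (2 * real n * t))"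

lemma uu_deriv: "(uu n has_real_derivative u1 n x) (at x)"
proof -
  have "((\<lambda>x. integral (cbox 0 pi) (\<lambda>t. exp (- 2 * x * sin t) * cos (2 * real n * t))) has_field_derivative
        integral (cbox 0 pi) (\<lambda>t. - 2 * sin t * exp (- 2 * x * sin t) * cos (2 * real n * t))) (at x within UNIV)"
    by (rule leibniz_rule_field_derivative)
       (auto intro!: derivative_eq_intros integrable_continuous_interval continuous_intros simp: split_beta)
  then show ?thesis unfolding uu_def u1_def by simp
qed

lemma u1_deriv: "(u1 n has_real_derivative u2 n x) (at x)"
proof -
  have "((\<lambda>x. integral (cbox 0 pi) (\<lambda>t. - 2 * sin t * exp (- 2 * x * sin t) * cos (2 * real n * t))) has_field_derivative
        integral (cbox 0 pi) (\<lambda>t. 4 * (sin t)\<^sup>2*exp (- 2 * x * sin t) * cos (2 * real n * t))) (at x within UNIV)"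
    by (rule leibniz_rule_field_derivative)
       (auto intro!: derivative_eq_intros integrable_continuous_interval continuous_intros simp: split_beta power2_eq_square)
  then show ?thesis unfolding u2_def u1_def by simp
qed

lemma vv_zero: "vv n x = 0"
proof -
  define g where "g = (\<lambda>t::real. exp (- 2 * x * sin t) * sin (2 * real n * t))"
  have refl: "integral {0..pi} (\<lambda>t. g (pi - t)) = integral {0..pi} g"
  proof -
    have "integral {-pi - -pi..0 - -pi} (\<lambda>t. (\<lambda>s. g (-s)) (t + -pi)) = integral {-pi..0} (\<lambda>s. g (-s))"
      by (rule integral_shift_real_ivl)
    also have "\<dots> = integral {0..pi} g" using Henstock_Kurzweil_Integration.integral_reflect_real[of pi 0 g] by simp
    finally show ?thesis by simp
  qed
  have neg: "g (pi - t) = - g t" for t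
  proof -
    have "sin (2 * real n * (pi - t)) = - sin (2 * real n * t)"
    proof -
      have "sin (2 * real n * (pi - t)) = sin (real (2*n) * pi - 2 * real n * t)" by (simp add: algebra_simps)
      also have "\<dots> = - sin (2 * real n * t)" by (simp add: sin_diff)
      finally show ?thesis .
    qed
    then show ?thesis unfolding g_def by simp
  qed
  have "vv n x = integral {0..pi} g" unfolding vv_def g_def by simp
  also have "\<dots> = integral {0..pi} (\<lambda>t. - g t)" using refl neg by simp
  also have "\<dots> = - integral {0..pi} g" by (rule integral_neg)
  finally show ?thesis unfolding vv_def g_def by simp
qed

lemma phi_eq: "phi n x = complex_of_real (uu n x)"
proof -
  have int: "(\<lambda>t. exp (- 2 * x * sin t) * cos (2 * real n * t)) integrable_on {0..pi}"
            "(\<lambda>t. exp (- 2 * x * sin t) * sin (2 * real n * t)) integrable_on {0..pi}"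
    by (auto intro!: integrable_continuous_interval continuous_intros)
  have e: "complex_of_real (exp (- 2 * x * sin t)) * exp (2 * \<i> * of_nat n * complex_of_real t)
        = complex_of_real (exp (- 2 * x * sin t) * cos (2 * real n * t)) + \<i> * complex_of_real (exp (- 2 * x * sin t) * sin (2 * real n * t))" for t
  proof -
    have "exp (2 * \<i> * of_nat n * complex_of_real t) = cis (2 * real n * t)"
      by (simp add: cis_conv_exp mult.commute mult.left_commute)
    then show ?thesis by (simp add: cis.ctr complex_eq_iff)
  qed
  have "((\<lambda>t. complex_of_real (exp (- 2 * x * sin t) * cos (2 * real n * t)) + \<i> * complex_of_real (exp (- 2 * x * sin t) * sin (2 * real n * t))) has_integral
         (complex_of_real (uu n x) + \<i> * complex_of_real (vv n x))) {0..pi}"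
    unfolding uu_def vv_def
    by (intro has_integral_add has_integral_mult_right has_integral_of_real integrable_integral int)
  then have "((\<lambda>t. complex_of_real (exp (- 2 * x * sin t)) * exp (2 * \<i> * of_nat n * complex_of_real t)) has_integral
         (complex_of_real (uu n x) + \<i> * complex_of_real (vv n x))) {0..pi}"
    by (simp only: e)
  then have "phi n x = complex_of_real (uu n x) + \<i> * complex_of_real (vv n x)"
    unfolding phi_def by (rule integral_unique)
  then show ?thesis by (simp add: vv_zero)
qed

lemma int_cmul_real: "f integrable_on S \<Longrightarrow> (\<lambda>x. (c::real) * f x) integrable_on S"
  using integrable_cmul[of f S c] by simp

lemma ftc_pi:
  assumes "\<And>t. (F has_real_derivative F' t) (at t)"
  shows "integral {0..pi} F' = F pi - F 0"
proof -
  have "(F' has_integral (F pi - F 0)) {0..pi}"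
    by (rule fundamental_theorem_of_calculus)
       (auto simp: has_real_derivative_iff_has_vector_derivative[symmetric] intro: has_field_derivative_at_within assms)
  then show ?thesis by (rule integral_unique)
qed

lemma uu_ode: "x\<^sup>2 * u2 n x + x * u1 n x - 4*(x\<^sup>2 + (real n)\<^sup>2) * uu n x = -4*x"
proof -
  define E where "E = (\<lambda>t. exp (- 2 * x * sin t))"
  define c where "c = (\<lambda>t. cos (2 * real n * t))"
  define s where "s = (\<lambda>t. sin (2 * real n * t))"
  have cE: "continuous_on {0..pi} E" unfolding E_def by (intro continuous_intros)
  have cc: "continuous_on {0..pi} c" unfolding c_def by (intro continuous_intros)
  have cs: "continuous_on {0..pi} s" unfolding s_def by (intro continuous_intros)
  have cs1: "continuous_on {0..pi} sin" "continuous_on {0..pi} cos" by (intro continuous_intros)+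
  note ints = integrable_continuous_interval[OF continuous_on_mult[OF continuous_on_const]]
  define Ia where "Ia = integral {0..pi} (\<lambda>t. sin t * E t * c t)"
  define Ib where "Ib = integral {0..pi} (\<lambda>t. (sin t)\<^sup>2 * E t * c t)"
  define J where "J = integral {0..pi} (\<lambda>t. cos t * E t * s t)"
  define K where "K = integral {0..pi} (\<lambda>t. (cos t)\<^sup>2 * E t * c t)"
  have i1: "(\<lambda>t. sin t * E t * c t) integrable_on {0..pi}"
    by (intro integrable_continuous_interval continuous_intros cE cc cs cs1)
  have i2: "(\<lambda>t. (sin t)\<^sup>2 * E t * c t) integrable_on {0..pi}"
    by (intro integrable_continuous_interval continuous_intros cE cc cs cs1)
  have i3: "(\<lambda>t. cos t * E t * s t) integrable_on {0..pi}"
    by (intro integrable_continuous_interval continuous_intros cE cc cs cs1)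
  have i4: "(\<lambda>t. (cos t)\<^sup>2 * E t * c t) integrable_on {0..pi}"
    by (intro integrable_continuous_interval continuous_intros cE cc cs cs1)
  have i5: "(\<lambda>t. E t * c t) integrable_on {0..pi}"
    by (intro integrable_continuous_interval continuous_intros cE cc cs cs1)
  have huu: "uu n x = integral {0..pi} (\<lambda>t. E t * c t)" unfolding uu_def E_def c_def by simp
  have hu1: "u1 n x = -2 * Ia"
  proof -
    have "u1 n x = integral {0..pi} (\<lambda>t. -2 * (sin t * E t * c t))"
      unfolding u1_def E_def c_def by (simp add: algebra_simps)
    then show ?thesis unfolding Ia_def by simp
  qed
  have hu2: "u2 n x = 4 * Ib"
  proof -
    have "u2 n x = integral {0..pi} (\<lambda>t. 4 * ((sin t)\<^sup>2 * E t * c t))"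
      unfolding u2_def E_def c_def by (simp add: algebra_simps)
    then show ?thesis unfolding Ib_def by simp
  qed
  have hK: "K = uu n x - Ib"
  proof -
    have "K = integral {0..pi} (\<lambda>t. E t * c t - (sin t)\<^sup>2 * E t * c t)"
      unfolding K_def by (rule arg_cong[where f="integral _"]) (simp add: fun_eq_iff cos_squared_eq algebra_simps)
    also have "\<dots> = uu n x - Ib" unfolding huu Ib_def by (rule integral_diff[OF i5 i2])
    finally show ?thesis .
  qed
  have dE: "(E has_real_derivative (-2*x*cos t) * E t) (at t)" for t
    unfolding E_def by (auto intro!: derivative_eq_intros)
  have dc: "(c has_real_derivative - (2 * real n) * s t) (at t)" for t
    unfolding c_def s_def by (auto intro!: derivative_eq_intros)
  have ds: "(s has_real_derivative (2 * real n) * c t) (at t)" for t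
    unfolding c_def s_def by (auto intro!: derivative_eq_intros)
  have E0: "E 0 = 1" "E pi = 1" unfolding E_def by simp_all
  have c0: "c 0 = 1" "c pi = 1" unfolding c_def by (simp_all add: cos_one_2pi_int)
  have s0: "s 0 = 0" "s pi = 0" unfolding s_def by (simp_all add: sin_npi_int)
  have F1: "integral {0..pi} (\<lambda>t. (-2*x) * (cos t * E t * s t) + (2 * real n) * (E t * c t)) = 0"
  proof -
    have "integral {0..pi} (\<lambda>t. (-2*x) * (cos t * E t * s t) + (2 * real n) * (E t * c t)) = E pi * s pi - E 0 * s 0"
      by (rule ftc_pi[where F="\<lambda>t. E t * s t"]) (auto intro!: derivative_eq_intros dE ds simp: algebra_simps)
    then show ?thesis using s0 by simp
  qed
  have F3: "integral {0..pi} (\<lambda>t. - (sin t * E t * c t) + (-2*x) * ((cos t)\<^sup>2 * E t * c t) + (- 2 * real n) * (cos t * E t * s t)) = -2"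
  proof -
    have "integral {0..pi} (\<lambda>t. - (sin t * E t * c t) + (-2*x) * ((cos t)\<^sup>2 * E t * c t) + (- 2 * real n) * (cos t * E t * s t))
        = cos pi * E pi * c pi - cos 0 * E 0 * c 0"
      by (rule ftc_pi[where F="\<lambda>t. cos t * E t * c t"]) (auto intro!: derivative_eq_intros dE dc simp: algebra_simps power2_eq_square)
    then show ?thesis using E0 c0 by simp
  qed
  have F1': "(-2*x) * J + (2 * real n) * uu n x = 0"
  proof -
    have "integral {0..pi} (\<lambda>t. (-2*x) * (cos t * E t * s t) + (2 * real n) * (E t * c t))
       = integral {0..pi} (\<lambda>t. (-2*x) * (cos t * E t * s t)) + integral {0..pi} (\<lambda>t. (2 * real n) * (E t * c t))"
      by (rule integral_add) (intro int_cmul_real i3 i5)+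
    also have "\<dots> = (-2*x) * J + (2 * real n) * uu n x"
      unfolding J_def huu by (simp only: integral_mult_right)
    finally show ?thesis using F1 by simp
  qed
  have F3': "- Ia + (-2*x) * K + (- 2 * real n) * J = -2"
  proof -
    have "integral {0..pi} (\<lambda>t. - (sin t * E t * c t) + (-2*x) * ((cos t)\<^sup>2 * E t * c t) + (- 2 * real n) * (cos t * E t * s t))
       = integral {0..pi} (\<lambda>t. - (sin t * E t * c t) + (-2*x) * ((cos t)\<^sup>2 * E t * c t)) + integral {0..pi} (\<lambda>t. (- 2 * real n) * (cos t * E t * s t))"
      by (rule integral_add) (intro integrable_add integrable_neg int_cmul_real i1 i3 i4)+
    also have "integral {0..pi} (\<lambda>t. - (sin t * E t * c t) + (-2*x) * ((cos t)\<^sup>2 * E t * c t))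
       = integral {0..pi} (\<lambda>t. - (sin t * E t * c t)) + integral {0..pi} (\<lambda>t. (-2*x) * ((cos t)\<^sup>2 * E t * c t))"
      by (rule integral_add) (intro integrable_add integrable_neg int_cmul_real i1 i3 i4)+
    also have "integral {0..pi} (\<lambda>t. - (sin t * E t * c t)) + integral {0..pi} (\<lambda>t. (-2*x) * ((cos t)\<^sup>2 * E t * c t))
        + integral {0..pi} (\<lambda>t. (- 2 * real n) * (cos t * E t * s t)) = - Ia + (-2*x) * K + (- 2 * real n) * J"
      unfolding J_def Ia_def K_def by (simp only: integral_mult_right integral_neg)
    finally show ?thesis using F3 by simp
  qed
  have A: "2*x*(- Ia + (-2*x) * K + (- 2 * real n) * J) = 2*x*(-2)" using F3' by simp
  have B: "x*J = real n * uu n x" using F1' by (simp add: algebra_simps)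
  have C: "real n * (x * J) = real n * (real n * uu n x)" using B by simp
  show ?thesis
    unfolding hu1 hu2 using A C hK
    by (simp add: algebra_simps power2_eq_square)
qed

lemma uu_zero: "n \<ge> 1 \<Longrightarrow> uu n 0 = 0"
proof -
  assume n: "n \<ge> 1"
  have "integral {0..pi} (\<lambda>t. cos (2 * real n * t)) = sin (2 * real n * pi) / (2 * real n) - sin (2 * real n * 0) / (2 * real n)"
    by (rule ftc_pi[where F="\<lambda>t. sin (2 * real n * t) / (2 * real n)"]) (use n in \<open>auto intro!: derivative_eq_intros\<close>)
  also have "\<dots> = 0"
  proof -
    have "sin (2 * real n * pi) = 0" using sin_npi[of "2*n"] by (simp add: mult.assoc)
    then show ?thesis by simp
  qed
  finally show ?thesis unfolding uu_def by simp
qed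

lemma uu_decay:
  assumes x: "x > 0"
  shows "\<bar>uu n x\<bar> \<le> 3 / x"
proof -
  define E where "E = (\<lambda>t. exp (- 2 * x * sin t))"
  have cE: "continuous_on {0..pi} E" unfolding E_def by (intro continuous_intros)
  have iE: "E integrable_on {0..pi}" by (rule integrable_continuous_interval[OF cE])
  have iEc: "(\<lambda>t. (cos t)\<^sup>2 * E t) integrable_on {0..pi}"
    by (intro integrable_continuous_interval continuous_intros cE)
  have iEs: "(\<lambda>t. sin t * E t) integrable_on {0..pi}"
    by (intro integrable_continuous_interval continuous_intros cE)
  have iEs2: "(\<lambda>t. (sin t)\<^sup>2 * E t) integrable_on {0..pi}"
    by (intro integrable_continuous_interval continuous_intros cE)
  have dE: "(E has_real_derivative (-2*x*cos t) * E t) (at t)" for t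
    unfolding E_def by (auto intro!: derivative_eq_intros)
  have "integral {0..pi} (\<lambda>t. - (sin t * E t) + (-2*x) * ((cos t)\<^sup>2 * E t)) = cos pi * E pi - cos 0 * E 0"
    by (rule ftc_pi[where F="\<lambda>t. cos t * E t"]) (auto intro!: derivative_eq_intros dE simp: algebra_simps power2_eq_square)
  also have "\<dots> = -2" unfolding E_def by simp
  finally have F: "integral {0..pi} (\<lambda>t. - (sin t * E t) + (-2*x) * ((cos t)\<^sup>2 * E t)) = -2" .
  have "integral {0..pi} (\<lambda>t. - (sin t * E t) + (-2*x) * ((cos t)\<^sup>2 * E t))
      = - integral {0..pi} (\<lambda>t. sin t * E t) + (-2*x) * integral {0..pi} (\<lambda>t. (cos t)\<^sup>2 * E t)"
    by (subst integral_add) (auto intro!: integrable_neg int_cmul_real iEc iEs)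
  with F have F2: "2*x * integral {0..pi} (\<lambda>t. (cos t)\<^sup>2 * E t) = 2 - integral {0..pi} (\<lambda>t. sin t * E t)" by simp
  have "integral {0..pi} (\<lambda>t. sin t * E t) \<ge> 0"
    by (rule integral_nonneg[OF iEs]) (auto simp: E_def sin_ge_zero)
  with F2 have "2*x * integral {0..pi} (\<lambda>t. (cos t)\<^sup>2 * E t) \<le> 2" by simp
  then have Ic: "integral {0..pi} (\<lambda>t. (cos t)\<^sup>2 * E t) \<le> 1/x" using x by (simp add: field_simps)
  have pt: "(sin t)\<^sup>2 * E t \<le> 1 / (2*x)" if t: "t \<in> {0..pi}" for t
  proof -
    have s0: "0 \<le> sin t" "sin t \<le> 1" using t by (auto simp: sin_ge_zero)
    have "2 * x * sin t \<le> exp (2 * x * sin t)"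
      using exp_ge_add_one_self[of "2 * x * sin t"] by linarith
    then have "2 * x * sin t * E t \<le> 1" unfolding E_def by (simp add: exp_minus field_simps)
    then have "sin t * E t \<le> 1/(2*x)" using x by (simp add: field_simps)
    moreover have "(sin t)\<^sup>2 * E t \<le> sin t * E t"
      using s0 by (simp add: power2_eq_square E_def mult_left_le_one_le mult_right_mono)
    ultimately show ?thesis by linarith
  qed
  have Is: "integral {0..pi} (\<lambda>t. (sin t)\<^sup>2 * E t) \<le> pi * (1/(2*x))"
  proof -
    have "integral {0..pi} (\<lambda>t. (sin t)\<^sup>2 * E t) \<le> integral {0..pi} (\<lambda>t. 1/(2*x))"
      by (rule integral_le[OF iEs2]) (auto intro: pt)
    then show ?thesis by simp
  qed
  have "integral {0..pi} E = integral {0..pi} (\<lambda>t. (cos t)\<^sup>2 * E t + (sin t)\<^sup>2 * E t)"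
    by (rule arg_cong[where f="integral _"]) (simp add: fun_eq_iff distrib_right[symmetric])
  also have "\<dots> = integral {0..pi} (\<lambda>t. (cos t)\<^sup>2 * E t) + integral {0..pi} (\<lambda>t. (sin t)\<^sup>2 * E t)"
    by (rule integral_add[OF iEc iEs2])
  also have "\<dots> \<le> 1/x + pi * (1/(2*x))" using Ic Is by linarith
  also have "\<dots> \<le> 3/x" using x pi_less_4 by (simp add: field_simps)
  finally have IE: "integral {0..pi} E \<le> 3/x" .
  have "\<bar>uu n x\<bar> \<le> integral {0..pi} E"
    unfolding uu_def real_norm_def[symmetric]
    by (rule integral_norm_bound_integral)
       (auto intro!: integrable_continuous_interval continuous_intros iE simp: E_def abs_mult)
  with IE show ?thesis by linarith
qed



lemma min_principle:
  fixes w wd wdd :: "real \<Rightarrow> real" and a :: real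
  assumes d1: "\<And>x. x>0 \<Longrightarrow> (w has_real_derivative wd x) (at x)"
      and d2: "\<And>x. x>0 \<Longrightarrow> (wd has_real_derivative wdd x) (at x)"
      and L: "\<And>x. x>0 \<Longrightarrow> x\<^sup>2 * wdd x + x * wd x \<le> 4*(x\<^sup>2 + a) * w x"
      and l0: "(w \<longlongrightarrow> 0) (at_right 0)" and li: "(w \<longlongrightarrow> 0) at_top"
      and a: "a \<ge> 0"
      and x: "x > 0"
  shows "w x \<ge> 0"
proof (rule ccontr)
  assume "\<not> 0 \<le> w x"
  then have c: "w x < 0" by simp
  have "eventually (\<lambda>t. w x / 2 < w t) (at_right 0)"
    by (rule order_tendstoD(1)[OF l0]) (use c in simp)
  then obtain b0 where b0: "b0 > 0" "\<And>t. t > 0 \<Longrightarrow> t < b0 \<Longrightarrow> w x / 2 < w t"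
    unfolding eventually_at_right_field by auto
  have "eventually (\<lambda>t. w x / 2 < w t) at_top"
    by (rule order_tendstoD(1)[OF li]) (use c in simp)
  then obtain N where N: "\<And>t. t \<ge> N \<Longrightarrow> w x / 2 < w t"
    unfolding eventually_at_top_linorder by auto
  define a1 where "a1 = min (b0/2) (x/2)"
  define b1 where "b1 = max N (x+1)"
  have a1: "0 < a1" "a1 < x" "a1 < b0" using b0 x unfolding a1_def by auto
  have b1: "x < b1" "N \<le> b1" unfolding b1_def by auto
  have cont: "continuous_on {a1..b1} w"
  proof (rule continuous_at_imp_continuous_on, rule ballI)
    fix t assume "t \<in> {a1..b1}"
    then have "t > 0" using a1 by auto
    then show "isCont w t" using d1 DERIV_isCont by blast
  qed
  obtain y0 where y0: "y0 \<in> {a1..b1}" "\<And>t. t \<in> {a1..b1} \<Longrightarrow> w y0 \<le> w t"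
    using continuous_attains_inf[OF compact_Icc _ cont] a1 b1 by auto
  have wy0: "w y0 \<le> w x" using y0 a1 b1 by auto
  have glob: "w y0 \<le> w t" if t: "t > 0" for t
  proof (cases "t < a1")
    case True
    then have "w x / 2 < w t" using b0(2)[OF t] a1 by auto
    then show ?thesis using wy0 c by linarith
  next
    case False
    show ?thesis
    proof (cases "t > b1")
      case True
      then have "w x / 2 < w t" using N b1 by auto
      then show ?thesis using wy0 c by linarith
    next
      case False
      then show ?thesis using y0 \<open>\<not> t < a1\<close> by auto
    qed
  qed
  have y0p: "y0 > 0" using y0 a1 by auto
  have w1z: "wd y0 = 0"
    by (rule DERIV_local_min[OF d1[OF y0p] y0p]) (auto intro!: glob)
  have w2nn: "wdd y0 \<ge> 0"
  proof (rule ccontr)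
    assume "\<not> 0 \<le> wdd y0"
    then obtain d where d: "d > 0" "\<And>h. h > 0 \<Longrightarrow> h < d \<Longrightarrow> wd y0 > wd (y0 + h)"
      using DERIV_neg_dec_right[OF d2[OF y0p]] by force
    define h where "h = d/2"
    have h: "h > 0" "h < d" using d unfolding h_def by auto
    have "\<forall>t. y0 \<le> t \<and> t \<le> y0 + h \<longrightarrow> DERIV w t :> wd t"
      using y0p h by (auto intro!: d1)
    then obtain z where z: "z > y0" "z < y0 + h" "w (y0 + h) - w y0 = (y0 + h - y0) * wd z"
      using MVT2[of y0 "y0+h" w wd] h by auto
    have "wd z < 0" using d(2)[of "z - y0"] z h w1z by auto
    then have "h * wd z < 0" using h by (simp add: mult_pos_neg)
    then have "w (y0 + h) < w y0" using z by simp
    moreover have "w y0 \<le> w (y0 + h)" using glob y0p h by auto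
    ultimately show False by linarith
  qed
  have "y0\<^sup>2 * wdd y0 + y0 * wd y0 \<le> 4*(y0\<^sup>2 + a) * w y0" by (rule L[OF y0p])
  moreover have "y0\<^sup>2 * wdd y0 + y0 * wd y0 \<ge> 0" using w1z w2nn by simp
  moreover have "4*(y0\<^sup>2 + a) * w y0 < 0"
    using wy0 c a y0p by (intro mult_pos_neg) (auto intro: add_pos_nonneg)
  ultimately show False by linarith
qed



lemma psi_d1: "(Psi k has_real_derivative deriv (Psi k) y) (at y)"
  unfolding Psi_rep deriv_rat by (rule dP_deriv)

lemma psi_d2: "(deriv (Psi k) has_real_derivative deriv (deriv (Psi k)) y) (at y)"
  unfolding Psi_rep deriv_rat by (rule dP_deriv)

lemma psi_rec: "y \<noteq> 0 \<Longrightarrow> 4*(1+y\<^sup>2)*Psi (Suc k) y = y\<^sup>2*deriv (deriv (Psi k)) y + y*deriv (Psi k) y"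
proof -
  assume y: "y \<noteq> 0"
  have q: "1 + y\<^sup>2 > 0" by (simp add: add_pos_nonneg)
  have g: "\<And>Q D1 D2. Q \<noteq> 0 \<Longrightarrow> 4*Q*(y\<^sup>2/(4*Q)*(D2 + D1/y)) = y\<^sup>2*D2 + y*D1"
    using y by (simp add: field_simps power2_eq_square)
  show ?thesis unfolding Psi.simps by (rule g) (use q in simp)
qed

lemma psi_zero: "Psi k 0 = 0"
  by (simp add: Psi_rep poly_0_coeff_0 SS_props)

lemma psi_cont: "isCont (Psi k) y"
  using psi_d1 DERIV_isCont by blast

lemma psi_top: "(Psi k \<longlongrightarrow> 0) at_top"
proof -
  obtain A where A: "A \<ge> 0" "\<And>y. y>0 \<Longrightarrow> \<bar>Psi k y\<bar> * (1+y\<^sup>2) \<le> A*y" using Psi_bound by blast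
  have "eventually (\<lambda>y. norm (Psi k y) \<le> A / y) at_top"
    using eventually_gt_at_top[of 0]
  proof eventually_elim
    case (elim y)
    have "\<bar>Psi k y\<bar> * (y*y) \<le> \<bar>Psi k y\<bar> * (1+y\<^sup>2)" by (simp add: mult_left_mono power2_eq_square)
    also have "\<dots> \<le> A*y" using A elim by auto
    finally have "\<bar>Psi k y\<bar> * y \<le> A" using elim by (simp add: mult.assoc[symmetric])
    then show ?case using elim by (simp add: field_simps)
  qed
  moreover have "((\<lambda>y. A / y) \<longlongrightarrow> 0) at_top" by (rule tendsto_divide_0[OF tendsto_const filterlim_at_top_imp_at_infinity[OF filterlim_ident]])
  ultimately show ?thesis by (rule Lim_null_comparison)
qed

lemma Psi1_bound: "y > 0 \<Longrightarrow> (1+y\<^sup>2) * Psi 1 y \<le> y/4"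
proof -
  assume y: "y > 0"
  have p: "poly (SS 1) y = y * (1 - 6*y\<^sup>2 + y^4) / 4"
    by (simp add: dP_def qq_def pderiv_pCons algebra_simps power2_eq_square power4_eq_xxxx)
  have q: "(1::real) + y\<^sup>2 > 0" by (simp add: add_pos_nonneg)
  have e: "Psi 1 y = poly (SS 1) y / (1+y\<^sup>2)^4" by (simp add: Psi_rep del: SS.simps)
  have "(1+y\<^sup>2) * Psi 1 y = y * (1 - 6*y\<^sup>2 + y^4) / (4 * (1+y\<^sup>2)^3)"
  proof -
    have e4: "(1+y\<^sup>2)^4 = (1+y\<^sup>2)^3*(1+y\<^sup>2)" by (simp add: eval_nat_numeral)
    have "(1+y\<^sup>2) * Psi 1 y = poly (SS 1) y / (1+y\<^sup>2)^3" unfolding e e4 using q by simp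
    then show ?thesis unfolding p by simp
  qed
  also have "\<dots> \<le> y * (1+y\<^sup>2)^3 / (4 * (1+y\<^sup>2)^3)"
  proof (rule divide_right_mono)
    have "1 - 6*y\<^sup>2 + y^4 \<le> (1+y\<^sup>2)^3"
    proof -
      have "(1+y\<^sup>2)^3 - (1 - 6*y\<^sup>2 + y^4) = 9*y\<^sup>2 + 2*y^4 + y^6"
        by (simp add: eval_nat_numeral algebra_simps)
      moreover have "9*y\<^sup>2 + 2*y^4 + y^6 \<ge> 0" using y by simp
      ultimately show ?thesis by linarith
    qed
    then show "y * (1 - 6*y\<^sup>2 + y^4) \<le> y * (1+y\<^sup>2)^3" using y by (simp add: mult_left_mono)
  qed (use q in simp)
  also have "\<dots> = y/4" using q by simp
  finally show ?thesis .
qed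



declare Psi.simps[simp del]

lemma alg1:
  fixes m y S P1 P2 M :: real
  assumes m: "m \<noteq> 0" and M: "M \<noteq> 0" and r: "4*(1+y\<^sup>2)*S = y\<^sup>2*P2 + y*P1"
  shows "(m*y)\<^sup>2*(P2/(M*m*m)) + (m*y)*(P1/(M*m)) = 4*((m*y)\<^sup>2 + m\<^sup>2)*(S/(M*m*m))"
proof -
  have "(m*y)\<^sup>2*(P2/(M*m*m)) + (m*y)*(P1/(M*m)) = (y\<^sup>2*P2 + y*P1)/M"
    using m M by (simp add: field_simps power2_eq_square)
  also have "\<dots> = 4*(1+y\<^sup>2)*S/M" using r by simp
  also have "\<dots> = 4*((m*y)\<^sup>2 + m\<^sup>2)*(S/(M*m*m))"
    using m M by (simp add: field_simps power2_eq_square)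
  finally show ?thesis .
qed

lemma T_deriv:
  assumes m: "m \<noteq> 0"
  shows "((\<lambda>x. Psi k (x/m) / m^(2*k+1)) has_real_derivative deriv (Psi k) (x/m) / (m^(2*k+1)*m)) (at x)"
    and "((\<lambda>x. deriv (Psi k) (x/m) / (m^(2*k+1)*m)) has_real_derivative deriv (deriv (Psi k)) (x/m) / (m^(2*k+1)*m*m)) (at x)"
proof -
  have "((\<lambda>x. Psi k (x/m)) has_real_derivative deriv (Psi k) (x/m) * (1/m)) (at x)"
    by (rule DERIV_chain2[OF psi_d1]) (use m in \<open>auto intro!: derivative_eq_intros\<close>)
  from DERIV_cdivide[OF this, of "m^(2*k+1)"]
  show "((\<lambda>x. Psi k (x/m) / m^(2*k+1)) has_real_derivative deriv (Psi k) (x/m) / (m^(2*k+1)*m)) (at x)"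
    using m by (simp add: field_simps)
  have "((\<lambda>x. deriv (Psi k) (x/m)) has_real_derivative deriv (deriv (Psi k)) (x/m) * (1/m)) (at x)"
    by (rule DERIV_chain2[OF psi_d2]) (use m in \<open>auto intro!: derivative_eq_intros\<close>)
  from DERIV_cdivide[OF this, of "m^(2*k+1)*m"]
  show "((\<lambda>x. deriv (Psi k) (x/m) / (m^(2*k+1)*m)) has_real_derivative deriv (deriv (Psi k)) (x/m) / (m^(2*k+1)*m*m)) (at x)"
    using m by (simp add: field_simps)
qed

lemma T_lim0:
  assumes "m \<noteq> 0" "c \<noteq> 0"
  shows "((\<lambda>x. Psi k (x/m) / c) \<longlongrightarrow> 0) (at_right 0)"
proof -
  have "isCont (\<lambda>x. Psi k (x/m) / c) 0"
    using assms by (intro continuous_intros isCont_o2[OF _ psi_cont])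
  then have "((\<lambda>x. Psi k (x/m) / c) \<longlongrightarrow> Psi k (0/m) / c) (at 0)"
    by (simp add: isCont_def)
  then show ?thesis using tendsto_mono[OF at_le[OF subset_UNIV]] by (simp add: psi_zero)
qed

lemma T_limtop:
  assumes m: "m > 0"
  shows "((\<lambda>x. Psi k (x/m) / c) \<longlongrightarrow> 0) at_top"
proof -
  have "filterlim (\<lambda>x. (1/m) * x) at_top at_top"
    by (rule filterlim_tendsto_pos_mult_at_top[OF tendsto_const _ filterlim_ident]) (use m in simp)
  then have f: "filterlim (\<lambda>x. x/m) at_top at_top" by (simp add: mult.commute)
  have "((\<lambda>x. Psi k (x/m)) \<longlongrightarrow> 0) at_top"
    by (rule filterlim_compose[OF psi_top f])
  then show ?thesis using tendsto_divide[OF _ tendsto_const, of _ 0 at_top c] 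
    by (cases "c = 0") auto
qed

lemma part1_n:
  fixes n N :: nat and A x :: real
  assumes n: "n \<ge> 1" and A: "A \<ge> 0" "\<And>y. y>0 \<Longrightarrow> \<bar>Psi (Suc N) y\<bar> * (1+y\<^sup>2) \<le> A*y" and x: "x > 0"
  shows "\<bar>uu n x - (\<Sum>k\<le>N. Psi k (x / real n) / real n ^ (2*k+1))\<bar> \<le> 2*A/real n^(2*N+2) * (x/(x\<^sup>2+(real n)\<^sup>2))"
proof -
  define m where "m = real n"
  have m: "m \<ge> 1" "m > 0" "m \<noteq> 0" using n m_def by auto
  define T where "T k x = Psi k (x/m)/m^(2*k+1)" for k x
  define T1 where "T1 k x = deriv (Psi k) (x/m)/(m^(2*k+1)*m)" for k x
  define T2 where "T2 k x = deriv (deriv (Psi k)) (x/m)/(m^(2*k+1)*m*m)" for k x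
  have dT: "(T k has_real_derivative T1 k x) (at x)" for k x
    unfolding T_def T1_def using T_deriv(1)[OF m(3)] by simp
  have dT1: "(T1 k has_real_derivative T2 k x) (at x)" for k x
    unfolding T1_def T2_def using T_deriv(2)[OF m(3)] by simp
  have key: "x\<^sup>2*T2 k x + x*T1 k x = 4*(x\<^sup>2+m\<^sup>2)*T (Suc k) x" if xp: "x > 0" for k x
  proof -
    define y where "y = x/m"
    have xy: "x = m*y" using m unfolding y_def by simp
    have y0: "y \<noteq> 0" using xp m unfolding y_def by simp
    have M: "m^(2*k+1) \<noteq> 0" using m by simp
    have e: "m^(2*Suc k+1) = m^(2*k+1)*m*m" by (simp add: power_Suc)
    show ?thesis
      unfolding T_def T1_def T2_def e y_def[symmetric] unfolding xy
      by (rule alg1[OF m(3) M psi_rec[OF y0]])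
  qed
  define St where "St x = (\<Sum>k\<le>N. T k x)" for x
  define St1 where "St1 x = (\<Sum>k\<le>N. T1 k x)" for x
  define St2 where "St2 x = (\<Sum>k\<le>N. T2 k x)" for x
  have dSt: "(St has_real_derivative St1 x) (at x)" for x
    unfolding St_def St1_def by (intro DERIV_sum dT)
  have dSt1: "(St1 has_real_derivative St2 x) (at x)" for x
    unfolding St1_def St2_def by (intro DERIV_sum dT1)
  have keyS: "x\<^sup>2*St2 x + x*St1 x = 4*(x\<^sup>2+m\<^sup>2)*(\<Sum>k\<le>N. T (Suc k) x)" if xp: "x > 0" for x
  proof -
    have "x\<^sup>2*St2 x + x*St1 x = (\<Sum>k\<le>N. x\<^sup>2*T2 k x + x*T1 k x)"
      unfolding St1_def St2_def by (simp add: sum_distrib_left sum.distrib)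
    also have "\<dots> = (\<Sum>k\<le>N. 4*(x\<^sup>2+m\<^sup>2)*T (Suc k) x)" using key[OF xp] by simp
    also have "\<dots> = 4*(x\<^sup>2+m\<^sup>2)*(\<Sum>k\<le>N. T (Suc k) x)" by (simp add: sum_distrib_left)
    finally show ?thesis .
  qed
  have tele: "St x - (\<Sum>k\<le>N. T (Suc k) x) = T 0 x - T (Suc N) x" for x
    unfolding St_def using sum_telescope[of "\<lambda>k. T k x" N] by (simp add: sum_subtractf)
  have T0e: "T 0 x = x/(x\<^sup>2+m\<^sup>2)" for x
  proof -
    have d: "x\<^sup>2+m\<^sup>2 > 0" using m by (simp add: add_nonneg_pos)
    have e1: "1 + (x/m)\<^sup>2 = (x\<^sup>2+m\<^sup>2)/m\<^sup>2" using m by (simp add: field_simps)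
    have "T 0 x = (x/m)/((x\<^sup>2+m\<^sup>2)/m\<^sup>2)/m" unfolding T_def by (simp add: e1 Psi.simps)
    also have "\<dots> = x/(x\<^sup>2+m\<^sup>2)"
    proof -
      have g: "\<And>D. D \<noteq> 0 \<Longrightarrow> (x/m)/(D/m\<^sup>2)/m = x/D" using m by (simp add: field_simps power2_eq_square)
      show ?thesis using d m by (intro g) simp
    qed
    finally show ?thesis .
  qed
  have T0: "4*(x\<^sup>2+m\<^sup>2)*T 0 x = 4*x" for x
  proof -
    have d: "x\<^sup>2+m\<^sup>2 > 0" using m by (simp add: add_nonneg_pos)
    have g: "\<And>D. D \<noteq> 0 \<Longrightarrow> 4*D*(x/D) = 4*x" by simp
    show ?thesis unfolding T0e[of x] using d m by (intro g) simp
  qed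
  define r where "r x = uu n x - St x" for x
  define r1 where "r1 x = u1 n x - St1 x" for x
  define r2 where "r2 x = u2 n x - St2 x" for x
  have dr: "(r has_real_derivative r1 x) (at x)" for x
    unfolding r_def[abs_def] r1_def by (intro DERIV_diff uu_deriv dSt)
  have dr1: "(r1 has_real_derivative r2 x) (at x)" for x
    unfolding r1_def[abs_def] r2_def by (intro DERIV_diff u1_deriv dSt1)
  have Lr: "4*(x\<^sup>2+m\<^sup>2)*r x - (x\<^sup>2*r2 x + x*r1 x) = 4*(x\<^sup>2+m\<^sup>2)*T (Suc N) x" if xp: "x > 0" for x
  proof -
    have o: "x\<^sup>2 * u2 n x + x * u1 n x - 4*(x\<^sup>2 + m\<^sup>2) * uu n x = -4*x" using uu_ode m_def by simp
    have "4*(x\<^sup>2+m\<^sup>2)*r x - (x\<^sup>2*r2 x + x*r1 x)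
        = (4*(x\<^sup>2+m\<^sup>2)*uu n x - (x\<^sup>2 * u2 n x + x * u1 n x)) - (4*(x\<^sup>2+m\<^sup>2)*St x - (x\<^sup>2*St2 x + x*St1 x))"
      unfolding r_def r1_def r2_def by (simp add: algebra_simps)
    also have "\<dots> = 4*x - 4*(x\<^sup>2+m\<^sup>2)*(St x - (\<Sum>k\<le>N. T (Suc k) x))"
      using o keyS[OF xp] by (simp add: algebra_simps)
    also have "\<dots> = 4*x - 4*(x\<^sup>2+m\<^sup>2)*(T 0 x - T (Suc N) x)" by (simp only: tele)
    also have "\<dots> = 4*(x\<^sup>2+m\<^sup>2)*T (Suc N) x" using T0[of x] by (simp add: algebra_simps)
    finally show ?thesis .
  qed
  have LB: "4*(x\<^sup>2+m\<^sup>2)*T 0 x - (x\<^sup>2*T2 0 x + x*T1 0 x) \<ge> 3*x" if xp: "x > 0" for x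
  proof -
    define y where "y = x/m"
    have xy: "x = m*y" using m unfolding y_def by simp
    have yp: "y > 0" using xp m unfolding y_def by simp
    have "4*(x\<^sup>2+m\<^sup>2)*T 1 x = 4*((1+y\<^sup>2)*Psi 1 y)/m"
    proof -
      have g: "\<And>P. 4*((m*y)\<^sup>2+m\<^sup>2)*(P/m^(2*1+1)) = 4*((1+y\<^sup>2)*P)/m"
        using m by (simp add: field_simps power2_eq_square eval_nat_numeral)
      show ?thesis unfolding T_def y_def[symmetric] unfolding xy by (rule g)
    qed
    also have "\<dots> \<le> 4*(y/4)/m" using Psi1_bound[OF yp] m by (simp add: divide_right_mono)
    also have "\<dots> = x/(m*m)" using m by (simp add: xy)
    also have "\<dots> \<le> x" using m xp by (simp add: field_simps) (smt (verit) mult_le_cancel_left1 mult_mono)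
    finally have "4*(x\<^sup>2+m\<^sup>2)*T 1 x \<le> x" .
    then show ?thesis using key[OF xp, of 0] T0[of x] by simp
  qed
  have LrB: "\<bar>4*(x\<^sup>2+m\<^sup>2)*T (Suc N) x\<bar> \<le> 4*A*x/m^(2*N+2)" if xp: "x > 0" for x
  proof -
    define y where "y = x/m"
    have xy: "x = m*y" using m unfolding y_def by simp
    have yp: "y > 0" using xp m unfolding y_def by simp
    have e: "m^(2*Suc N+1) = m^(2*N+2)*m" by simp
    have "\<bar>4*(x\<^sup>2+m\<^sup>2)*T (Suc N) x\<bar> = 4*(\<bar>Psi (Suc N) y\<bar>*(1+y\<^sup>2))*m/m^(2*N+2)"
    proof -
      have Mp: "m^(2*N+2) > 0" using m by simp
      have g: "\<bar>4*((m*y)\<^sup>2+m\<^sup>2)*(P/(m^(2*N+2)*m))\<bar> = 4*(\<bar>P\<bar>*(1+y\<^sup>2))*m/m^(2*N+2)" for P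
      proof -
        have p1: "4*((m*y)\<^sup>2+m\<^sup>2) \<ge> 0" by simp
        have "\<bar>4*((m*y)\<^sup>2+m\<^sup>2)*(P/(m^(2*N+2)*m))\<bar> = 4*((m*y)\<^sup>2+m\<^sup>2)*(\<bar>P\<bar>/(m^(2*N+2)*m))"
          using p1 Mp m by (simp add: abs_mult abs_div)
        also have "\<dots> = 4*(\<bar>P\<bar>*(1+y\<^sup>2))*m/m^(2*N+2)"
          using Mp m by (simp add: field_simps power2_eq_square)
        finally show ?thesis .
      qed
      show ?thesis unfolding T_def y_def[symmetric] e unfolding xy by (rule g)
    qed
    also have "\<dots> \<le> 4*(A*y)*m/m^(2*N+2)"
      using A(2)[OF yp] m by (intro divide_right_mono mult_right_mono) auto
    also have "\<dots> = 4*A*x/m^(2*N+2)" by (simp add: xy algebra_simps)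
    finally show ?thesis .
  qed
  define K where "K = 2*A/m^(2*N+2)"
  have Kp: "K \<ge> 0" using A m unfolding K_def by simp
  have lim_r0: "(r \<longlongrightarrow> 0) (at_right 0)"
  proof -
    have "isCont (uu n) 0" using uu_deriv DERIV_isCont by blast
    then have "(uu n \<longlongrightarrow> 0) (at 0)" using uu_zero[OF n] by (simp add: isCont_def)
    then have u0: "(uu n \<longlongrightarrow> 0) (at_right 0)" using tendsto_mono[OF at_le[OF subset_UNIV]] by blast
    have "(St \<longlongrightarrow> (\<Sum>k\<le>N. 0)) (at_right 0)"
      unfolding St_def[abs_def] T_def using m by (intro tendsto_sum T_lim0) auto
    then have "(St \<longlongrightarrow> 0) (at_right 0)" by simp
    from tendsto_diff[OF u0 this] show ?thesis unfolding r_def[abs_def] by simp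
  qed
  have lim_rt: "(r \<longlongrightarrow> 0) at_top"
  proof -
    have "eventually (\<lambda>x. norm (uu n x) \<le> 3/x) at_top"
      using eventually_gt_at_top[of "0::real"] by eventually_elim (simp add: uu_decay)
    moreover have "((\<lambda>x. 3 / x :: real) \<longlongrightarrow> 0) at_top"
      by (rule tendsto_divide_0[OF tendsto_const filterlim_at_top_imp_at_infinity[OF filterlim_ident]])
    ultimately have u0: "(uu n \<longlongrightarrow> 0) at_top" by (rule Lim_null_comparison)
    have "(St \<longlongrightarrow> (\<Sum>k\<le>N. 0)) at_top"
      unfolding St_def[abs_def] T_def using m by (intro tendsto_sum T_limtop) auto
    then have "(St \<longlongrightarrow> 0) at_top" by simp
    from tendsto_diff[OF u0 this] show ?thesis unfolding r_def[abs_def] by simp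
  qed
  have lim_B0: "(T 0 \<longlongrightarrow> 0) (at_right 0)" unfolding T_def[abs_def] using m by (intro T_lim0) auto
  have lim_Bt: "(T 0 \<longlongrightarrow> 0) at_top" unfolding T_def[abs_def] using m by (intro T_limtop) auto
  have bound: "\<sigma> * r x \<le> K * T 0 x" if sg: "\<sigma> = 1 \<or> \<sigma> = -1" for \<sigma> :: real
  proof -
    define w where "w x = K * T 0 x - \<sigma> * r x" for x
    define w1 where "w1 x = K * T1 0 x - \<sigma> * r1 x" for x
    define w2 where "w2 x = K * T2 0 x - \<sigma> * r2 x" for x
    have "w x \<ge> 0"
    proof (rule min_principle[where w=w and wd=w1 and wdd=w2 and a="m\<^sup>2"])
      show "(w has_real_derivative w1 t) (at t)" if "t > 0" for t
        unfolding w_def[abs_def] w1_def by (intro DERIV_diff DERIV_cmult dT dr)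
      show "(w1 has_real_derivative w2 t) (at t)" if "t > 0" for t
        unfolding w1_def[abs_def] w2_def by (intro DERIV_diff DERIV_cmult dT1 dr1)
      show "t\<^sup>2 * w2 t + t * w1 t \<le> 4*(t\<^sup>2 + m\<^sup>2) * w t" if tp: "t > 0" for t
      proof -
        have e: "4*(t\<^sup>2 + m\<^sup>2) * w t - (t\<^sup>2 * w2 t + t * w1 t)
           = K * (4*(t\<^sup>2+m\<^sup>2)*T 0 t - (t\<^sup>2*T2 0 t + t*T1 0 t)) - \<sigma> * (4*(t\<^sup>2+m\<^sup>2)*r t - (t\<^sup>2*r2 t + t*r1 t))"
          unfolding w_def w1_def w2_def by (simp add: algebra_simps)
        have a1: "K * (4*(t\<^sup>2+m\<^sup>2)*T 0 t - (t\<^sup>2*T2 0 t + t*T1 0 t)) \<ge> K * (3*t)"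
          using LB[OF tp] Kp by (simp add: mult_left_mono)
        have a2: "\<sigma> * (4*(t\<^sup>2+m\<^sup>2)*r t - (t\<^sup>2*r2 t + t*r1 t)) \<le> 4*A*t/m^(2*N+2)"
          using LrB[OF tp] Lr[OF tp] sg by auto
        have a3: "K * (3*t) \<ge> 4*A*t/m^(2*N+2)"
          unfolding K_def using A m tp by (simp add: field_simps)
        show ?thesis using e a1 a2 a3 by linarith
      qed
      show "(w \<longlongrightarrow> 0) (at_right 0)"
        unfolding w_def[abs_def] using tendsto_diff[OF tendsto_mult_right_zero[OF lim_B0] tendsto_mult_right_zero[OF lim_r0]] by simp
      show "(w \<longlongrightarrow> 0) at_top"
        unfolding w_def[abs_def] using tendsto_diff[OF tendsto_mult_right_zero[OF lim_Bt] tendsto_mult_right_zero[OF lim_rt]] by simp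
    qed (use m x in auto)
    then show ?thesis unfolding w_def by simp
  qed
  have "\<bar>r x\<bar> \<le> K * T 0 x" using bound[of 1] bound[of "-1"] by auto
  then show ?thesis unfolding r_def St_def T_def K_def m_def[symmetric] T0e[unfolded T_def]
    using T0e[of x] unfolding T_def by (simp add: mult_ac)
qed



lemma aux_y:
  fixes y \<delta> :: real
  assumes y: "y > 0" and d: "0 \<le> \<delta>" "\<delta> \<le> 1"
  shows "y/(1+y\<^sup>2) \<le> 2*(y powr \<delta>)/(1+y)"
proof -
  have q: "1 + y\<^sup>2 > 0" by (simp add: add_pos_nonneg)
  have prod: "y*(1+y) \<le> 2*(y powr \<delta>)*(1+y\<^sup>2)"
  proof (cases "y \<le> 1")
    case True
    have "y = y powr 1" using y by simp
    also have "\<dots> \<le> y powr \<delta>" using powr_mono'[OF d(2), of y] True y by simp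
    finally have a: "y \<le> y powr \<delta>" .
    have b: "1 + y \<le> 2*(1+y\<^sup>2)" using True zero_le_power2[of y] by (smt (verit))
    have "y*(1+y) \<le> (y powr \<delta>)*(2*(1+y\<^sup>2))"
      using a b y by (intro mult_mono) auto
    then show ?thesis by (simp add: algebra_simps)
  next
    case False
    have a: "1 \<le> y powr \<delta>" using False d by (intro ge_one_powr_ge_zero) auto
    have b: "y*(1+y) \<le> 2*(1+y\<^sup>2)" using False by (simp add: power2_eq_square algebra_simps) (smt (verit) mult_le_cancel_left1)
    have c: "1*(2*(1+y\<^sup>2)) \<le> y powr \<delta>*(2*(1+y\<^sup>2))" by (rule mult_right_mono[OF a]) (use q in simp)
    have eq: "y powr \<delta>*(2*(1+y\<^sup>2)) = 2*(y powr \<delta>)*(1+y\<^sup>2)" by (simp add: mult_ac)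
    have "2*(1+y\<^sup>2) \<le> 2*(y powr \<delta>)*(1+y\<^sup>2)" using c eq by linarith
    with b show ?thesis by linarith
  qed
  show ?thesis using prod q y by (simp add: field_simps)
qed

lemma part1:
  fixes N :: nat and \<delta> :: real
  assumes d: "0 \<le> \<delta>" "\<delta> \<le> 1"
  shows "\<exists>C>0. \<forall>n::nat. n \<ge> 1 \<longrightarrow> (\<forall>x::real. x > 0 \<longrightarrow>
       norm (phi n x - (\<Sum>k\<le>N. complex_of_real (Psi k (x / real n) / real n ^ (2*k+1))))
         \<le> C / real n powr (2 * real N + 5/3) * (x powr \<delta> / (1 + x / real n)))"
proof -
  obtain A where A: "A \<ge> 0" "\<And>y. y>0 \<Longrightarrow> \<bar>Psi (Suc N) y\<bar> * (1+y\<^sup>2) \<le> A*y"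
    using Psi_bound by blast
  show ?thesis
  proof (intro exI[of _ "4*A+1"] conjI allI impI)
    show "0 < 4*A+1" using A by simp
    fix n :: nat and x :: real
    assume n: "n \<ge> 1" and x: "x > 0"
    define m where "m = real n"
    have m: "m \<ge> 1" "m > 0" using n m_def by auto
    define y where "y = x/m"
    have yp: "y > 0" using x m y_def by simp
    have "norm (phi n x - (\<Sum>k\<le>N. complex_of_real (Psi k (x / real n) / real n ^ (2*k+1))))
        = \<bar>uu n x - (\<Sum>k\<le>N. Psi k (x / real n) / real n ^ (2*k+1))\<bar>"
      unfolding phi_eq of_real_sum[symmetric] of_real_diff[symmetric] norm_of_real by simp
    also have "\<dots> \<le> 2*A/m^(2*N+2) * (x/(x\<^sup>2+m\<^sup>2))"
      using part1_n[OF n A x] unfolding m_def .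
    also have "x/(x\<^sup>2+m\<^sup>2) = (y/(1+y\<^sup>2))/m"
    proof -
      have g: "\<And>D. D \<noteq> 0 \<Longrightarrow> x/(D*m\<^sup>2) = (x/m)/D/m" using m by (simp add: field_simps power2_eq_square)
      have e: "x\<^sup>2+m\<^sup>2 = (1+y\<^sup>2)*m\<^sup>2" unfolding y_def using m by (simp add: field_simps)
      have "1+y\<^sup>2 \<noteq> 0" by (metis add_pos_nonneg zero_less_one zero_le_power2 less_irrefl)
      then show ?thesis unfolding e y_def by (rule g)
    qed
    also have "2*A/m^(2*N+2) * ((y/(1+y\<^sup>2))/m) \<le> 2*A/m^(2*N+2) * ((2*(y powr \<delta>)/(1+y))/m)"
      using aux_y[OF yp d] A m by (intro mult_left_mono divide_right_mono) auto
    also have "\<dots> = 4*A/(m^(2*N+3) * m powr \<delta>) * (x powr \<delta> / (1 + x / m))"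
    proof -
      have yd: "y powr \<delta> = x powr \<delta> / m powr \<delta>" unfolding y_def using m x by (simp add: powr_divide)
      have s3: "2*N+3 = Suc (2*N+2)" by simp
      have e3: "m^(2*N+3) = m^(2*N+2)*m" by (simp only: s3 power_Suc2)
      have mp: "m powr \<delta> > 0" "m^(2*N+2) > 0" using m by auto
      have q: "1 + x/m > 0" using m x by (simp add: add_pos_pos)
      have g: "\<And>X P Q M. P > 0 \<Longrightarrow> Q > 0 \<Longrightarrow> M > 0 \<Longrightarrow> 2*A/M * ((2*(X/P)/Q)/m) = 4*A/(M*m*P) * (X/Q)"
        using m by (simp add: field_simps)
      show ?thesis unfolding yd e3 using mp q unfolding y_def by (intro g) auto
    qed
    also have "\<dots> \<le> (4*A+1) / m powr (2 * real N + 5/3) * (x powr \<delta> / (1 + x / m))"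
    proof (rule mult_right_mono)
      have "m powr (2 * real N + 5/3) \<le> m powr (real (2*N+3) + \<delta>)"
        using m d by (intro powr_mono) auto
      also have "\<dots> = m powr (real (2*N+3)) * m powr \<delta>" by (rule powr_add)
      also have "\<dots> = m^(2*N+3) * m powr \<delta>" using powr_realpow[OF m(2), of "2*N+3"] by (simp only:)
      finally have le: "m powr (2 * real N + 5/3) \<le> m^(2*N+3) * m powr \<delta>" .
      have p: "m powr (2 * real N + 5/3) > 0" using m by simp
      have "4*A/(m^(2*N+3) * m powr \<delta>) \<le> 4*A / m powr (2 * real N + 5/3)"
      proof (rule divide_left_mono[OF le])
        show "0 \<le> 4*A" using A by simp
        have "0 < m^(2*N+3) * m powr \<delta>" using m by simp
        then show "0 < m ^ (2 * N + 3) * m powr \<delta> * m powr (2 * real N + 5 / 3)" using p by simp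
      qed
      also have "\<dots> \<le> (4*A+1) / m powr (2 * real N + 5/3)"
        using p by (intro divide_right_mono) auto
      finally show "4*A/(m^(2*N+3) * m powr \<delta>) \<le> (4*A+1) / m powr (2 * real N + 5/3)" .
      show "0 \<le> x powr \<delta> / (1 + x / m)" using x m by simp
    qed
    finally show "norm (phi n x - (\<Sum>k\<le>N. complex_of_real (Psi k (x / real n) / real n ^ (2*k+1))))
         \<le> (4*A+1) / real n powr (2 * real N + 5/3) * (x powr \<delta> / (1 + x / real n))"
      unfolding m_def .
  qed
qed



lemma psi_meas[measurable]: "Psi k \<in> borel_measurable borel"
  by (intro borel_measurable_continuous_onI continuous_at_imp_continuous_on ballI psi_cont)

lemma phi_meas[measurable]: "phi n \<in> borel_measurable borel"
proof -
  have "continuous_on UNIV (uu n)"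
    by (intro continuous_at_imp_continuous_on ballI) (use uu_deriv DERIV_isCont in blast)
  then have "uu n \<in> borel_measurable borel" by (rule borel_measurable_continuous_onI)
  moreover have "phi n = (\<lambda>x. complex_of_real (uu n x))" by (simp add: fun_eq_iff phi_eq)
  ultimately show ?thesis by simp
qed

lemma xpow_lb:
  fixes x \<delta> :: real
  assumes x: "x > 0" and d: "0 \<le> \<delta>" "\<delta> \<le> 1"
  shows "1 \<le> x powr (\<delta>-1) * (1+x)"
proof (cases "x \<le> 1")
  case True
  have "1 = x powr 0" using x by simp
  also have "\<dots> \<le> x powr (\<delta>-1)" using powr_mono'[of "\<delta>-1" 0 x] True x d by simp
  finally have a: "1 \<le> x powr (\<delta>-1)" .
  have "x powr (\<delta>-1) \<le> x powr (\<delta>-1) * (1+x)" using x by (simp add: mult_le_cancel_left1)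
  with a show ?thesis by linarith
next
  case False
  have "x powr (\<delta>-1) * x = x powr \<delta>" using x by (simp add: powr_diff)
  moreover have "1 \<le> x powr \<delta>" using False d by (intro ge_one_powr_ge_zero) auto
  moreover have "x powr (\<delta>-1) * x \<le> x powr (\<delta>-1) * (1+x)" using x by (intro mult_left_mono) auto
  ultimately show ?thesis by linarith
qed

lemma ineq_psi:
  fixes x b \<delta> A :: real and n :: nat
  assumes x: "x > 0" and b: "0 < b" "b < 1" and n: "n \<ge> 1" and d: "0 \<le> \<delta>" "\<delta> \<le> 1"
    and A: "A \<ge> 0" "\<And>y. y>0 \<Longrightarrow> \<bar>Psi k y\<bar> * (1+y\<^sup>2) \<le> A*y"
  shows "\<bar>Psi k (b*x/n)/x\<bar> \<le> 2*A*(x powr (\<delta>-1)/(1+b*x/n))"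
proof -
  define t where "t = b*x/n"
  have tp: "t > 0" using x b n unfolding t_def by simp
  have q: "1 + t\<^sup>2 > 0" by (simp add: add_pos_nonneg)
  have bn: "b/n \<le> 1" using b n by (simp add: field_simps)
  have "\<bar>Psi k t\<bar> \<le> A*t/(1+t\<^sup>2)" using A(2)[OF tp] q by (simp add: field_simps)
  then have a1: "\<bar>Psi k t/x\<bar> \<le> A*(b/n)/(1+t\<^sup>2)"
    using x unfolding t_def by (simp add: abs_div field_simps)
  have key: "(b/n)*(1+t) \<le> 2*(x powr (\<delta>-1))*(1+t\<^sup>2)"
  proof -
    have l: "1 \<le> x powr (\<delta>-1) * (1+x)" by (rule xpow_lb[OF x d])
    have e: "(b/n)*(1+x) = b/n + t" unfolding t_def by (simp add: add_divide_distrib distrib_left)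
    have "(b/n)*(1+t) \<le> (b/n)*(1+t)*(x powr (\<delta>-1) * (1+x))"
    proof -
      have c0: "0 \<le> (b/n)*(1+t)" using b tp by simp
      from mult_left_mono[OF l c0] show ?thesis by simp
    qed
    also have "\<dots> = x powr (\<delta>-1) * ((b/n)*(1+x)) * (1+t)" by (simp add: mult_ac)
    also have "\<dots> \<le> x powr (\<delta>-1) * (1+t) * (1+t)"
      using e bn tp x by (intro mult_right_mono mult_left_mono) auto
    also have "\<dots> \<le> x powr (\<delta>-1) * (2*(1+t\<^sup>2))"
    proof -
      have "(1+t)*(1+t) \<le> 2*(1+t\<^sup>2)" using zero_le_square[of "t - 1"] by (simp add: algebra_simps power2_eq_square)
      then show ?thesis using x by (simp add: mult.assoc mult_left_mono)
    qed
    finally show ?thesis by (simp add: algebra_simps)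
  qed
  have "A*(b/n)/(1+t\<^sup>2) \<le> 2*A*(x powr (\<delta>-1)/(1+t))"
  proof -
    have "A*((b/n)*(1+t)) \<le> A*(2*(x powr (\<delta>-1))*(1+t\<^sup>2))" using key A by (intro mult_left_mono) auto
    moreover have g: "\<And>u v aa dd. (u::real) > 0 \<Longrightarrow> v > 0 \<Longrightarrow> aa * u \<le> dd * v \<Longrightarrow> aa/v \<le> dd/u"
      by (simp add: field_simps)
    ultimately have "(A*(b/n))/(1+t\<^sup>2) \<le> (2*A*x powr (\<delta>-1))/(1+t)"
      using q tp by (intro g) (auto simp: mult_ac)
    then show ?thesis by simp
  qed
  with a1 show ?thesis unfolding t_def by simp
qed



theorem corollary3p4:
  fixes N :: nat and \<delta> :: real
  assumes "0 \<le> \<delta>" and "\<delta> < 1/3"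
  shows "\<exists>C>0. \<forall>n::nat. n \<ge> 1 \<longrightarrow>
    (\<forall>x::real. x > 0 \<longrightarrow>
       norm (phi n x - (\<Sum>k\<le>N. complex_of_real (Psi k (x / real n) / real n ^ (2*k+1))))
         \<le> C / real n powr (2 * real N + 5/3) * (x powr \<delta> / (1 + x / real n)))
  \<and> (\<forall>(b::real) (M::real measure) (K0::real \<Rightarrow> real).
       0 < b \<and> b < 1 \<and> sets M = sets borel \<and> (AE x in M. 0 \<le> x) \<and>
       (\<forall>t>0. integrable M (\<lambda>x. exp (- t * x)) \<and>
              (K0 has_real_derivative (- (\<integral>x. exp (- t * x) \<partial>M))) (at t))
     \<longrightarrow>
       (let \<epsilon> = lambda_nb M n b - 2 * (\<Sum>k\<le>N. complex_of_real
                   ((\<integral>x. Psi k (b * x / real n) / x \<partial>M) / real n ^ (2*k+1)));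
            R = (\<integral>\<^sup>+x. (if x = 0 then \<infinity> else ennreal (x powr (\<delta> - 1) / (1 + b * x / real n))) \<partial>M)
        in ennreal (norm \<epsilon>) \<le> ennreal (C / real n powr (2 * real N + 5/3)) * R
           \<and> (R < \<infinity> \<longrightarrow> integrable M (\<lambda>x. phi n (b * x) / complex_of_real x)
                 \<and> (\<forall>k\<le>N. integrable M (\<lambda>x. Psi k (b * x / real n) / x)))))"
proof -
  have d: "0 \<le> \<delta>" "\<delta> \<le> 1" using assms by auto
  obtain C0 where C0: "C0 > 0" and P1: "\<And>n x. n \<ge> 1 \<Longrightarrow> x > 0 \<Longrightarrow>
       norm (phi n x - (\<Sum>k\<le>N. complex_of_real (Psi k (x / real n) / real n ^ (2*k+1))))
         \<le> C0 / real n powr (2 * real N + 5/3) * (x powr \<delta> / (1 + x / real n))"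
    using part1[OF d, of N] by blast
  have main: "\<forall>n::nat. n \<ge> 1 \<longrightarrow>
    (\<forall>x::real. x > 0 \<longrightarrow>
       norm (phi n x - (\<Sum>k\<le>N. complex_of_real (Psi k (x / real n) / real n ^ (2*k+1))))
         \<le> (2*C0) / real n powr (2 * real N + 5/3) * (x powr \<delta> / (1 + x / real n)))
  \<and> (\<forall>(b::real) (M::real measure) (K0::real \<Rightarrow> real).
       0 < b \<and> b < 1 \<and> sets M = sets borel \<and> (AE x in M. 0 \<le> x) \<and>
       (\<forall>t>0. integrable M (\<lambda>x. exp (- t * x)) \<and>
              (K0 has_real_derivative (- (\<integral>x. exp (- t * x) \<partial>M))) (at t))
     \<longrightarrow>
       (let \<epsilon> = lambda_nb M n b - 2 * (\<Sum>k\<le>N. complex_of_real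
                   ((\<integral>x. Psi k (b * x / real n) / x \<partial>M) / real n ^ (2*k+1)));
            R = (\<integral>\<^sup>+x. (if x = 0 then \<infinity> else ennreal (x powr (\<delta> - 1) / (1 + b * x / real n))) \<partial>M)
        in ennreal (norm \<epsilon>) \<le> ennreal ((2*C0) / real n powr (2 * real N + 5/3)) * R
           \<and> (R < \<infinity> \<longrightarrow> integrable M (\<lambda>x. phi n (b * x) / complex_of_real x)
                 \<and> (\<forall>k\<le>N. integrable M (\<lambda>x. Psi k (b * x / real n) / x)))))"
  proof (intro allI impI conjI)
    fix n :: nat and x :: real
    assume n: "1 \<le> n" and x: "0 < x"
    have pp: "real n powr (2 * real N + 5/3) > 0" using n by simp
    have X: "0 \<le> x powr \<delta> / (1 + x / real n)" using x n by simp
    have "C0 / real n powr (2 * real N + 5/3) \<le> (2*C0) / real n powr (2 * real N + 5/3)"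
      using C0 pp by (simp add: divide_right_mono)
    from mult_right_mono[OF this X] P1[OF n x]
    show "norm (phi n x - (\<Sum>k\<le>N. complex_of_real (Psi k (x / real n) / real n ^ (2*k+1))))
         \<le> (2*C0) / real n powr (2 * real N + 5/3) * (x powr \<delta> / (1 + x / real n))" by linarith
  next
    fix n :: nat and b :: real and M :: "real measure" and K0 :: "real \<Rightarrow> real"
    assume n: "1 \<le> n"
    assume H: "0 < b \<and> b < 1 \<and> sets M = sets borel \<and> (AE x in M. 0 \<le> x) \<and>
       (\<forall>t>0. integrable M (\<lambda>x. exp (- t * x)) \<and>
              (K0 has_real_derivative (- (\<integral>x. exp (- t * x) \<partial>M))) (at t))"
    then have b: "0 < b" "b < 1" and sM: "sets M = sets borel" and AE0: "AE x in M. 0 \<le> x" by auto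
    have mc: "measurable M N' = measurable borel N'" for N' :: "'z measure"
      by (rule measurable_cong_sets[OF sM refl])
    define p where "p = real n powr (2 * real N + 5/3)"
    have pp: "p > 0" using n p_def by simp
    define h where "h x = x powr (\<delta> - 1) / (1 + b * x / real n)" for x
    define R where "R = (\<integral>\<^sup>+x. (if x = 0 then \<infinity> else ennreal (x powr (\<delta> - 1) / (1 + b * x / real n))) \<partial>M)"
    define \<epsilon> where "\<epsilon> = lambda_nb M n b - 2 * (\<Sum>k\<le>N. complex_of_real
                   ((\<integral>x. Psi k (b * x / real n) / x \<partial>M) / real n ^ (2*k+1)))"
    have goal: "ennreal (norm \<epsilon>) \<le> ennreal ((2*C0) / p) * R
           \<and> (R < \<infinity> \<longrightarrow> integrable M (\<lambda>x. phi n (b * x) / complex_of_real x)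
                 \<and> (\<forall>k\<le>N. integrable M (\<lambda>x. Psi k (b * x / real n) / x)))"
    proof (cases "R = \<infinity>")
      case True
      have "ennreal ((2*C0) / p) \<noteq> 0" using C0 pp by simp
      then have "ennreal ((2*C0) / p) * R = \<infinity>" using True by (simp add: ennreal_mult_top)
      then show ?thesis using True by simp
    next
      case False
      then have Rfin: "R < \<infinity>" by (simp add: top.not_eq_extremum)
      have gmeas: "(\<lambda>x::real. if x = 0 then \<infinity> else ennreal (x powr (\<delta> - 1) / (1 + b * x / real n))) \<in> borel_measurable M"
        unfolding mc by measurable
      have "AE x in M. (if x = 0 then \<infinity> else ennreal (x powr (\<delta> - 1) / (1 + b * x / real n))) \<noteq> \<infinity>"
        by (rule nn_integral_PInf_AE[OF gmeas]) (use False R_def in simp)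
      then have AEnz: "AE x in M. x \<noteq> 0" by eventually_elim (auto split: if_splits)
      have AEpos: "AE x in M. x > 0" using AE0 AEnz by eventually_elim auto
      have hnn: "x > 0 \<Longrightarrow> h x \<ge> 0" for x unfolding h_def using b n by simp
      have hmeas: "h \<in> borel_measurable M" unfolding mc h_def by measurable
      have Rh: "R = (\<integral>\<^sup>+x. ennreal (h x) \<partial>M)"
        unfolding R_def h_def by (rule nn_integral_cong_AE) (use AEpos in \<open>eventually_elim, auto\<close>)
      have Rnorm: "(\<integral>\<^sup>+x. ennreal (norm (h x)) \<partial>M) = R"
        unfolding Rh by (rule nn_integral_cong_AE) (use AEpos in \<open>eventually_elim, auto simp: hnn\<close>)
      have hint: "integrable M h"
        by (rule integrableI_bounded[OF hmeas]) (unfold Rnorm, rule Rfin)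
      have Rint: "R = ennreal (integral\<^sup>L M h)"
        unfolding Rh by (rule nn_integral_eq_integral[OF hint]) (use AEpos in \<open>eventually_elim, simp add: hnn\<close>)
      have psiint: "integrable M (\<lambda>x. Psi k (b * x / real n) / x)" for k
      proof -
        obtain A where A: "A \<ge> 0" "\<And>y. y>0 \<Longrightarrow> \<bar>Psi k y\<bar> * (1+y\<^sup>2) \<le> A*y" using Psi_bound by blast
        show ?thesis
        proof (rule Bochner_Integration.integrable_bound[where f="\<lambda>x. 2*A*h x"])
          show "integrable M (\<lambda>x. 2*A*h x)" using hint by simp
          show "(\<lambda>x. Psi k (b * x / real n) / x) \<in> borel_measurable M" unfolding mc by measurable
          show "AE x in M. norm (Psi k (b * x / real n) / x) \<le> norm (2*A*h x)"
            using AEpos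
          proof eventually_elim
            case (elim x)
            have "\<bar>Psi k (b*x/n)/x\<bar> \<le> 2*A*(x powr (\<delta>-1)/(1+b*x/n))"
              by (rule ineq_psi[OF elim b n d A])
            moreover have q: "1 + b * x / real n > 0" using b elim n by (simp add: add_pos_pos)
            ultimately show ?case using hnn[OF elim] A unfolding h_def by (simp add: abs_of_pos[OF q])
          qed
        qed
      qed
      define S where "S x = (\<Sum>k\<le>N. complex_of_real (Psi k (b * x / real n) / x / real n ^ (2*k+1)))" for x
      define F where "F x = phi n (b * x) / complex_of_real x - S x" for x
      have Sint: "integrable M S" unfolding S_def
      proof (rule Bochner_Integration.integrable_sum)
        fix k assume "k \<in> {..N}"
        have "integrable M (\<lambda>x. Psi k (b * x / real n) / x / real n ^ (2*k+1))"
          by (rule integrable_divide_zero) (rule psiint)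
        then show "integrable M (\<lambda>x. complex_of_real (Psi k (b * x / real n) / x / real n ^ (2*k+1)))"
          by (rule integrable_of_real)
      qed
      have Fbound: "norm (F x) \<le> C0 / p * h x" if xp: "x > 0" for x
      proof -
        have bx: "b * x > 0" using b xp by simp
        have e: "F x = (phi n (b * x) - (\<Sum>k\<le>N. complex_of_real (Psi k (b * x / real n) / real n ^ (2*k+1)))) / complex_of_real x"
        proof -
          have s: "S x = (\<Sum>k\<le>N. complex_of_real (Psi k (b * x / real n) / real n ^ (2*k+1))) / complex_of_real x"
            unfolding S_def sum_divide_distrib by (rule sum.cong) (simp_all add: divide_divide_eq_left mult.commute)
          show ?thesis unfolding F_def s by (simp only: diff_divide_distrib)
        qed
        have "norm (F x) = norm (phi n (b * x) - (\<Sum>k\<le>N. complex_of_real (Psi k (b * x / real n) / real n ^ (2*k+1)))) / x"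
          unfolding e using xp by (simp add: norm_divide)
        also have "\<dots> \<le> (C0 / p * ((b*x) powr \<delta> / (1 + b * x / real n))) / x"
          using P1[OF n bx] xp unfolding p_def by (intro divide_right_mono) auto
        also have "\<dots> \<le> C0 / p * h x"
        proof -
          have bd: "b powr \<delta> \<le> 1" using b d by (intro powr_le1) auto
          have "(b*x) powr \<delta> / x = b powr \<delta> * (x powr (\<delta> - 1))"
            using b xp by (simp add: powr_mult powr_diff)
          also have "\<dots> \<le> x powr (\<delta> - 1)" using bd by (simp add: mult_left_le_one_le)
          finally have k: "(b*x) powr \<delta> / x \<le> x powr (\<delta> - 1)" .
          have q: "1 + b * x / real n > 0" using b xp n by (simp add: add_pos_pos)
          have "(C0 / p * ((b*x) powr \<delta> / (1 + b * x / real n))) / x = C0 / p * (((b*x) powr \<delta> / x) / (1 + b * x / real n))"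
            by simp
          also have "\<dots> \<le> C0 / p * (x powr (\<delta> - 1) / (1 + b * x / real n))"
            using k q C0 pp by (intro mult_left_mono divide_right_mono) auto
          finally show ?thesis unfolding h_def .
        qed
        finally show ?thesis .
      qed
      have Fmeas: "F \<in> borel_measurable M" unfolding mc F_def S_def by measurable
      have Fint: "integrable M F"
      proof (rule Bochner_Integration.integrable_bound[where f="\<lambda>x. C0 / p * h x"])
        show "integrable M (\<lambda>x. C0 / p * h x)" using hint by simp
        show "AE x in M. norm (F x) \<le> norm (C0 / p * h x)"
          using AEpos by eventually_elim (use Fbound hnn C0 pp in \<open>auto simp: abs_of_nonneg\<close>)
      qed (rule Fmeas)
      have phiint: "integrable M (\<lambda>x. phi n (b * x) / complex_of_real x)"
      proof -
        have "integrable M (\<lambda>x. F x + S x)" using Fint Sint by (rule Bochner_Integration.integrable_add)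
        moreover have "(\<lambda>x. F x + S x) = (\<lambda>x. phi n (b * x) / complex_of_real x)" unfolding F_def by simp
        ultimately show ?thesis by simp
      qed
      have intS: "integral\<^sup>L M S = (\<Sum>k\<le>N. complex_of_real ((\<integral>x. Psi k (b * x / real n) / x \<partial>M) / real n ^ (2*k+1)))"
      proof -
        have i: "integrable M (\<lambda>x. complex_of_real (Psi k (b * x / real n) / x / real n ^ (2*k+1)))" for k
        proof -
          have "integrable M (\<lambda>x. Psi k (b * x / real n) / x / real n ^ (2*k+1))"
            by (rule integrable_divide_zero) (rule psiint)
          then show ?thesis by (rule integrable_of_real)
        qed
        have t: "(\<integral>x. complex_of_real (Psi k (b * x / real n) / x / real n ^ (2*k+1)) \<partial>M)
            = complex_of_real ((\<integral>x. Psi k (b * x / real n) / x \<partial>M) / real n ^ (2*k+1))" for k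
          by (simp only: integral_complex_of_real integral_divide_zero)
        have "integral\<^sup>L M S = (\<Sum>k\<le>N. (\<integral>x. complex_of_real (Psi k (b * x / real n) / x / real n ^ (2*k+1)) \<partial>M))"
          unfolding S_def by (rule Bochner_Integration.integral_sum) (rule i)
        then show ?thesis by (simp only: t)
      qed
      have eps: "\<epsilon> = 2 * integral\<^sup>L M F"
      proof -
        have e1: "integral\<^sup>L M F = integral\<^sup>L M (\<lambda>x. phi n (b * x) / complex_of_real x) - integral\<^sup>L M S"
          unfolding F_def by (rule Bochner_Integration.integral_diff[OF phiint Sint])
        show ?thesis unfolding \<epsilon>_def lambda_nb_def intS[symmetric] e1 by (simp only: right_diff_distrib)
      qed
      have "norm \<epsilon> = 2 * norm (integral\<^sup>L M F)" unfolding eps by (simp add: norm_mult)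
      also have "\<dots> \<le> 2 * (\<integral>x. norm (F x) \<partial>M)" by simp
      also have "\<dots> \<le> 2 * (\<integral>x. C0 / p * h x \<partial>M)"
      proof -
        have "(\<integral>x. norm (F x) \<partial>M) \<le> (\<integral>x. C0 / p * h x \<partial>M)"
          by (rule integral_mono_AE) (use Fint hint AEpos Fbound in \<open>auto elim!: eventually_mono\<close>)
        then show ?thesis by simp
      qed
      also have "\<dots> = (2*C0) / p * integral\<^sup>L M h" by simp
      finally have le: "norm \<epsilon> \<le> (2*C0) / p * integral\<^sup>L M h" .
      have hpos: "integral\<^sup>L M h \<ge> 0"
        by (rule integral_nonneg_AE) (use AEpos hnn in \<open>auto elim!: eventually_mono\<close>)
      have "ennreal (norm \<epsilon>) \<le> ennreal ((2*C0) / p * integral\<^sup>L M h)" using le by (rule ennreal_leI)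
      also have "\<dots> = ennreal ((2*C0) / p) * R" unfolding Rint
        by (rule ennreal_mult) (use C0 pp hpos in simp_all)
      finally show ?thesis using phiint psiint by simp
    qed
    then show "let \<epsilon> = lambda_nb M n b - 2 * (\<Sum>k\<le>N. complex_of_real
                   ((\<integral>x. Psi k (b * x / real n) / x \<partial>M) / real n ^ (2*k+1)));
            R = (\<integral>\<^sup>+x. (if x = 0 then \<infinity> else ennreal (x powr (\<delta> - 1) / (1 + b * x / real n))) \<partial>M)
        in ennreal (norm \<epsilon>) \<le> ennreal ((2*C0) / real n powr (2 * real N + 5/3)) * R
           \<and> (R < \<infinity> \<longrightarrow> integrable M (\<lambda>x. phi n (b * x) / complex_of_real x)
                 \<and> (\<forall>k\<le>N. integrable M (\<lambda>x. Psi k (b * x / real n) / x)))"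
      unfolding Let_def \<epsilon>_def[symmetric] R_def[symmetric] p_def[symmetric] .
  qed
  show ?thesis using C0 main by (intro exI[of _ "2*C0"]) auto
qed


end
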